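(* Let $\bm u\in\mathbb{C}^{Nd}$ and $\mu\in\mathbb{C}\setminus\{0\}$. Then $\bm u$ is a left eigenvector of $\mathcal N$ corresponding to the eigenvalue $\mu$ (i.e. $\bm u\neq0$ and $\bm u^*\mathcal N(\mu)=0$) if and only if $\bm u$ is a right eigenvector of $\mathcal M$ corresponding to the eigenvalue $\bar\mu$ (i.e. $\bm u\neq0$ and $\mathcal M(\bar\mu)\bm u=0$).
   Context: Setting: $A_j:\mathbb{R}\to\mathbb{R}^{d\times d}$ ($j=0,\dots,h$) smooth and $T$-periodic, $T=N\Delta$, delays $\tau_j=n_j\Delta$ with integers $0=n_0\le n_1<\cdots<n_h$. For $\mu\neq0$ the $Nd\times Nd$ matrix $A(s,\mu)$ is defined blockwise: for $\bm q=(q_1^{\mathrm T},\ldots,q_N^{\mathrm T})^{\mathrm T}$ the $n$-th block of $A(s,\mu)\bm q$ is $\Delta\sum_{j=0}^h A_j((s+n-1)\Delta)\mu^{a_{n-n_j}}q_{b_{n-n_j}}$, with $a_k=\lfloor(k-1)/N\rfloor$, $b_k=((k-1)\bmod N)+1$. Let $B(\mu)=\begin{pmatrix}0&I_{N-1}\\ \mu&0\end{pmatrix}\otimes I_d$. Define $\mathcal N(\mu)\bm v=\bm q(1)-B(\mu)\bm v$ where $\dot{\bm q}(s)=A(s,\mu)\bm q(s)$ on $[0,1]$, $\bm q(0)=\bm v$. Define the "transposed" problem $\mathcal M(\mu)\bm v=\bm p(0)-B(\mu)^{\mathrm T}\bm v$, where $\bm p$ solves $\dot{\bm p}(s)=-A(s,\mu)^{\mathrm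 T}\bm p(s)$, $s\in[0,1]$, $\bm p(1)=\bm v$. Here ${}^*$ denotes conjugate transpose and $\bar\mu$ complex conjugate. *)

theory Defs
  imports Complex_Main "HOL-Analysis.Derivative" "Jordan_Normal_Form.Matrix"
begin

text \<open>Vectors in C^(Nd) are complex vecs of dimension N*d; the component with
  (0-based) index r lies in block n = r div d + 1 (1-based, n = 1..N),
  at position r mod d inside the block.\<close>

definition smooth_fun :: "(real \<Rightarrow> real) \<Rightarrow> bool" where
  "smooth_fun f \<longleftrightarrow> (\<forall>k x. ((deriv ^^ k) f) differentiable (at x))"

definition ak :: "nat \<Rightarrow> int \<Rightarrow> int" where
  "ak N k = (k - 1) div int N"

definition bk :: "nat \<Rightarrow> int \<Rightarrow> nat" where
  "bk N k = nat ((k - 1) mod int N) + 1"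

text \<open>The Nd x Nd matrix A(s,mu); nd j is the integer delay n_j, A j t the d x d matrix A_j(t).\<close>
definition Amat :: "nat \<Rightarrow> nat \<Rightarrow> real \<Rightarrow> nat \<Rightarrow> (nat \<Rightarrow> nat) \<Rightarrow> (nat \<Rightarrow> real \<Rightarrow> real mat)
                     \<Rightarrow> real \<Rightarrow> complex \<Rightarrow> complex mat" where
  "Amat d N \<Delta> h nd A s \<mu> = mat (N * d) (N * d) (\<lambda>(r, c).
      let n = r div d + 1; i = r mod d; m = c div d + 1; l = c mod d in
      complex_of_real \<Delta> * (\<Sum>j\<le>h.
         if bk N (int n - int (nd j)) = m
         then complex_of_real (A j ((s + real n - 1) * \<Delta>) $$ (i, l)) * \<mu> powi ak N (int n - int (nd j))
         else 0))"

text \<open>B(mu) = [[0, I_(N-1)], [mu, 0]] tensor I_d.\<close>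
definition Bmat :: "nat \<Rightarrow> nat \<Rightarrow> complex \<Rightarrow> complex mat" where
  "Bmat d N \<mu> = mat (N * d) (N * d) (\<lambda>(r, c).
      if r mod d = c mod d then
        (if c div d = r div d + 1 then 1
         else if r div d = N - 1 \<and> c div d = 0 then \<mu> else 0)
      else 0)"

definition lin_sol :: "nat \<Rightarrow> (real \<Rightarrow> complex mat) \<Rightarrow> (real \<Rightarrow> complex vec) \<Rightarrow> bool" where
  "lin_sol n M q \<longleftrightarrow> (\<forall>s\<in>{0..1}. q s \<in> carrier_vec n \<and>
      (\<forall>r<n. ((\<lambda>t. q t $ r) has_vector_derivative (M s *\<^sub>v q s) $ r) (at s within {0..1})))"

definition Nop :: "nat \<Rightarrow> nat \<Rightarrow> real \<Rightarrow> nat \<Rightarrow> (nat \<Rightarrow> nat) \<Rightarrow> (nat \<Rightarrow> real \<Rightarrow> real mat)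
                     \<Rightarrow> complex \<Rightarrow> complex vec \<Rightarrow> complex vec" where
  "Nop d N \<Delta> h nd A \<mu> v = (THE w. \<exists>q. lin_sol (N * d) (\<lambda>s. Amat d N \<Delta> h nd A s \<mu>) q \<and>
      q 0 = v \<and> w = q 1 - Bmat d N \<mu> *\<^sub>v v)"

definition Mop :: "nat \<Rightarrow> nat \<Rightarrow> real \<Rightarrow> nat \<Rightarrow> (nat \<Rightarrow> nat) \<Rightarrow> (nat \<Rightarrow> real \<Rightarrow> real mat)
                     \<Rightarrow> complex \<Rightarrow> complex vec \<Rightarrow> complex vec" where
  "Mop d N \<Delta> h nd A \<mu> v = (THE w. \<exists>p. lin_sol (N * d) (\<lambda>s. - transpose_mat (Amat d N \<Delta> h nd A s \<mu>)) p \<and>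
      p 1 = v \<and> w = p 0 - transpose_mat (Bmat d N \<mu>) *\<^sub>v v)"

end

theory Submission
  imports Defs "HOL-Analysis.Henstock_Kurzweil_Integration"
begin

primrec pic :: "nat \<Rightarrow> (nat \<Rightarrow> nat \<Rightarrow> real \<Rightarrow> complex) \<Rightarrow> (nat \<Rightarrow> complex) \<Rightarrow> nat \<Rightarrow> real \<Rightarrow> nat \<Rightarrow> complex" where
  "pic n m v 0 = (\<lambda>t r. v r)"
| "pic n m v (Suc k) = (\<lambda>t r. v r + integral {0..t} (\<lambda>s. \<Sum>c<n. m r c s * pic n m v k s c))"

lemma cont_integral:
  fixes g :: "real \<Rightarrow> 'a::banach"
  assumes "continuous_on {a..b} g"
  shows "continuous_on {a..b} (\<lambda>t. integral {a..t} g)"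
  unfolding continuous_on_eq_continuous_within
  using integral_has_vector_derivative[OF assms] has_vector_derivative_continuous by blast

lemma pic_cont:
  assumes mc: "\<And>r c. r<n \<Longrightarrow> c<n \<Longrightarrow> continuous_on {0..1} (m r c)"
  shows "r < n \<Longrightarrow> continuous_on {0..1} (\<lambda>t. pic n m v k t r)"
proof (induction k arbitrary: r)
  case 0 then show ?case by simp
next
  case (Suc k)
  have "continuous_on {0..1} (\<lambda>s. \<Sum>c<n. m r c s * pic n m v k s c)"
    using Suc mc by (intro continuous_on_sum continuous_on_mult) auto
  then show ?case by (simp add: continuous_on_add cont_integral)
qed

lemma pow_aux: "((x::real)^k + real k * x^(k - Suc 0) * x) * C / (1 + real k) = C * x^k"
proof -
  have "(x^k + real k * x^(k - Suc 0) * x) = (1 + real k) * x^k"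
    by (cases k) (simp_all add: algebra_simps)
  then show ?thesis by (simp add: field_simps)
qed

lemma pow_int:
  assumes "0 \<le> t"
  shows "((\<lambda>s. C * s^k) has_integral C * t^(Suc k) / Suc k) {0..t}"
proof -
  have "((\<lambda>s. C * s^k) has_integral (C * t^(Suc k) / Suc k - C * 0^(Suc k) / Suc k)) {0..t}"
    apply (rule fundamental_theorem_of_calculus[OF assms])
    apply (rule has_vector_derivative_within_subset[where S=UNIV])
     apply (auto simp: has_real_derivative_iff_has_vector_derivative[symmetric] intro!: derivative_eq_intros)
    apply (simp add: pow_aux)
    done
  then show ?thesis by simp
qed

lemma a1: "(K * (V * K * K^k / fact k)) * t^(Suc k) / real (Suc k) = V * K * (K*t)^(Suc k) / fact (Suc k)"
  for K V t :: real
  unfolding power_mult_distrib fact_Suc power_Suc of_nat_mult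
  by (simp add: mult_ac)

lemma a2: "norm (\<Sum>c<n. (m c::complex) * v c) \<le> real n * B * V" if "\<And>c. c<n \<Longrightarrow> norm (m c) \<le> B" "\<And>c. c<n \<Longrightarrow> norm (v c) \<le> V" "B \<ge> 0"
proof -
  have "norm (\<Sum>c<n. m c * v c) \<le> (\<Sum>c<n. norm (m c * v c))" by (rule norm_sum)
  also have "\<dots> \<le> (\<Sum>c<n. B * V)"
    by (rule sum_mono) (simp add: norm_mult mult_mono[OF that(1) that(2) that(3) norm_ge_zero])
  finally show ?thesis by simp
qed

lemma pic_bound:
  assumes mc: "\<And>r c. r<n \<Longrightarrow> c<n \<Longrightarrow> continuous_on {0..1} (m r c)"
    and mB: "\<And>r c s. r<n \<Longrightarrow> c<n \<Longrightarrow> s\<in>{0..1} \<Longrightarrow> norm (m r c s) \<le> B"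
    and vV: "\<And>c. c<n \<Longrightarrow> norm (v c) \<le> V" and B: "B \<ge> 0" and V: "V \<ge> 0"
  shows "t\<in>{0..1} \<Longrightarrow> r<n \<Longrightarrow> norm (pic n m v (Suc k) t r - pic n m v k t r) \<le> V * (n*B) * (n*B*t)^k / fact k"
proof (induction k arbitrary: t r)
  case 0
  then have t1: "0 \<le> t" "t \<le> 1" and rn: "r < n" by auto
  have ci: "(\<lambda>s. \<Sum>c<n. m r c s * v c) integrable_on {0..t}"
    apply (rule integrable_continuous_interval, rule continuous_on_subset[of "{0..1}"])
    using t1 rn mc by (auto intro!: continuous_on_sum continuous_on_mult)
  have "norm (integral {0..t} (\<lambda>s. \<Sum>c<n. m r c s * v c)) \<le> integral {0..t} (\<lambda>s. n*B*V)"
  proof (rule integral_norm_bound_integral[OF ci])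
    fix s assume s: "s \<in> {0..t}"
    then have s1: "s \<in> {0..1}" using t1 by auto
    show "norm (\<Sum>c<n. m r c s * v c) \<le> n*B*V"
      by (rule a2) (use s1 rn mB vV B in auto)
  qed (rule integrable_const_ivl)
  also have "\<dots> = t * (n*B*V)" using t1 by (simp add: content_real)
  also have "\<dots> \<le> 1 * (n*B*V)" using t1 B V by (intro mult_right_mono) auto
  finally show ?case by (simp add: mult_ac)
next
  case (Suc k)
  let ?d = "\<lambda>s c. pic n m v (Suc k) s c - pic n m v k s c"
  define g where "g j = (\<lambda>s. \<Sum>c<n. m r c s * pic n m v j s c)" for j
  have i1: "g j integrable_on {0..t}" for j
    unfolding g_def
    apply (rule integrable_continuous_interval, rule continuous_on_subset[of "{0..1}"])
    using Suc mc pic_cont[OF mc] by (auto intro!: continuous_on_sum continuous_on_mult)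
  have gS: "pic n m v (Suc j) t r = v r + integral {0..t} (g j)" for j
    by (simp add: g_def)
  have gd: "g (Suc k) s - g k s = (\<Sum>c<n. m r c s * ?d s c)" for s
    by (simp add: g_def sum_subtractf[symmetric] right_diff_distrib del: pic.simps)
  have "pic n m v (Suc (Suc k)) t r - pic n m v (Suc k) t r = integral {0..t} (\<lambda>s. g (Suc k) s - g k s)"
    by (simp only: gS integral_diff[OF i1 i1]) simp
  then have eq: "pic n m v (Suc (Suc k)) t r - pic n m v (Suc k) t r = integral {0..t} (\<lambda>s. \<Sum>c<n. m r c s * ?d s c)"
    by (simp only: gd)
  have ci: "(\<lambda>s. \<Sum>c<n. m r c s * ?d s c) integrable_on {0..t}"
    using integrable_diff[OF i1 i1, of "Suc k" k] by (simp only: gd)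
  define K where "K = n*B"
  define C where "C = K * (V * K * K^k / fact k)"
  have t0: "0 \<le> t" using Suc by auto
  have "norm (integral {0..t} (\<lambda>s. \<Sum>c<n. m r c s * ?d s c)) \<le> integral {0..t} (\<lambda>s. C * s^k)"
  proof (rule integral_norm_bound_integral[OF ci])
    fix s assume s: "s \<in> {0..t}"
    then have s1: "s \<in> {0..1}" using Suc by auto
    have "norm (\<Sum>c<n. m r c s * ?d s c) \<le> real n * B * (V * (real n * B) * (real n * B * s)^k / fact k)"
      by (rule a2) (use s1 Suc mB B in auto)
    also have "\<dots> = C * s^k" unfolding C_def K_def power_mult_distrib by (simp add: mult_ac)
    finally show "norm (\<Sum>c<n. m r c s * ?d s c) \<le> C * s^k" .
  next
    show "(\<lambda>s. C * s^k) integrable_on {0..t}" using pow_int[OF t0] by blast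
  qed
  also have "\<dots> = C * t^(Suc k) / Suc k" using pow_int[OF t0] by (rule integral_unique)
  also have "\<dots> = V * (n*B) * (n*B*t)^(Suc k) / fact (Suc k)"
    unfolding C_def K_def by (rule a1)
  finally show ?case using eq by simp
qed


lemma ode_exists:
  fixes M :: "real \<Rightarrow> complex mat" and v :: "complex vec"
  assumes Mc: "\<And>s. M s \<in> carrier_mat n n"
    and cont: "\<And>r c. r<n \<Longrightarrow> c<n \<Longrightarrow> continuous_on {0..1} (\<lambda>s. M s $$ (r,c))"
    and v: "v \<in> carrier_vec n"
  shows "\<exists>q. lin_sol n M q \<and> q 0 = v"
proof -
  define m where "m r c s = M s $$ (r,c)" for r c s
  define vv where "vv c = v $ c" for c
  have mc: "continuous_on {0..1} (m r c)" if "r<n" "c<n" for r c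
    using cont[OF that] unfolding m_def by simp
  have "continuous_on {0..1} (\<lambda>s. \<Sum>r<n. \<Sum>c<n. norm (m r c s))"
    using mc by (auto intro!: continuous_on_sum continuous_on_norm)
  then obtain B where B: "B \<ge> 0" and B2: "\<And>s. s\<in>{0..1} \<Longrightarrow> norm (\<Sum>r<n. \<Sum>c<n. norm (m r c s)) \<le> B"
    using continuous_on_compact_bound[OF compact_Icc] by blast
  have mB: "norm (m r c s) \<le> B" if "r<n" "c<n" "s\<in>{0..1}" for r c s
  proof -
    have "norm (m r c s) \<le> (\<Sum>c'<n. norm (m r c' s))"
      by (rule member_le_sum) (use that in auto)
    also have "\<dots> \<le> (\<Sum>r'<n. \<Sum>c'<n. norm (m r' c' s))"
      by (rule member_le_sum[of r "{..<n}" "\<lambda>r'. \<Sum>c'<n. norm (m r' c' s)"]) (use that in \<open>auto intro: sum_nonneg\<close>)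
    also have "\<dots> \<le> norm (\<Sum>r'<n. \<Sum>c'<n. norm (m r' c' s))" by simp
    also have "\<dots> \<le> B" using B2 that by blast
    finally show ?thesis .
  qed
  define V where "V = (\<Sum>c<n. norm (vv c))"
  have vV: "norm (vv c) \<le> V" if "c<n" for c
    unfolding V_def by (rule member_le_sum) (use that in auto)
  have V0: "V \<ge> 0" unfolding V_def by (simp add: sum_nonneg)
  define K where "K = real n * B"
  have K0: "K \<ge> 0" using B by (simp add: K_def)
  define P where "P = pic n m vv"
  define Q where "Q t r = vv r + (\<Sum>i. P (Suc i) t r - P i t r)" for t r
  have Pc: "continuous_on {0..1} (\<lambda>t. P k t r)" if "r<n" for k r
    unfolding P_def using pic_cont[of n m, OF mc that] by blast
  have bnd: "norm (P (Suc i) t r - P i t r) \<le> V*K*K^i/fact i" if "t\<in>{0..1}" "r<n" for t r i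
  proof -
    have "norm (P (Suc i) t r - P i t r) \<le> V*K*(K*t)^i/fact i"
      unfolding P_def K_def by (rule pic_bound[of n m B vv V, OF mc mB vV B V0 that])
    also have "\<dots> \<le> V*K*K^i/fact i"
      using that K0 V0 by (intro divide_right_mono mult_left_mono power_mono) (auto intro: mult_left_le)
    finally show ?thesis .
  qed
  have summ: "summable (\<lambda>i. V*K*K^i/fact i)"
  proof -
    have "summable (\<lambda>i. V*K * (inverse (fact i) * K^i))"
      by (rule summable_mult[OF summable_exp])
    then show ?thesis by (simp add: divide_inverse mult_ac)
  qed
  have U: "uniform_limit {0..1} (\<lambda>k t. P k t r) (\<lambda>t. Q t r) sequentially" if "r<n" for r
  proof -
    have "uniform_limit {0..1} (\<lambda>k t. \<Sum>i<k. P (Suc i) t r - P i t r) (\<lambda>t. \<Sum>i. P (Suc i) t r - P i t r) sequentially"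
      by (rule Weierstrass_m_test[OF bnd[OF _ that] summ])
    then have "uniform_limit {0..1} (\<lambda>k t. vv r + (\<Sum>i<k. P (Suc i) t r - P i t r)) (\<lambda>t. vv r + (\<Sum>i. P (Suc i) t r - P i t r)) sequentially"
      by (rule uniform_limit_add[OF uniform_limit_const])
    moreover have "vv r + (\<Sum>i<k. P (Suc i) t r - P i t r) = P k t r" for k t
    proof -
      have "(\<Sum>i<k. P (Suc i) t r - P i t r) = P k t r - P 0 t r" by (rule sum_lessThan_telescope)
      moreover have "P 0 t r = vv r" by (simp add: P_def)
      ultimately show ?thesis by simp
    qed
    ultimately show ?thesis by (simp add: Q_def)
  qed
  have QC: "continuous_on {0..1} (\<lambda>t. Q t r)" if "r<n" for r
    by (rule uniform_limit_theorem[OF always_eventually U[OF that]]) (use Pc[OF that] in auto)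
  define G where "G r s = (\<Sum>c<n. m r c s * Q s c)" for r s
  have GC: "continuous_on {0..1} (G r)" if "r<n" for r
    unfolding G_def using mc that QC by (auto intro!: continuous_on_sum continuous_on_mult)
  have I: "Q t r = vv r + integral {0..t} (G r)" if t: "t\<in>{0..1}" and r: "r<n" for t r
  proof -
    define g where "g k = (\<lambda>s. \<Sum>c<n. m r c s * P k s c)" for k
    have ugl: "uniform_limit {0..1} g (G r) sequentially"
      unfolding uniform_limit_iff
    proof (intro allI impI)
      fix e :: real assume e: "e > 0"
      define e' where "e' = e / (K + 1)"
      have e': "e' > 0" using e K0 by (simp add: e'_def)
      have "\<forall>c\<in>{..<n}. \<forall>\<^sub>F k in sequentially. \<forall>s\<in>{0..1}. dist (P k s c) (Q s c) < e'"
        using U uniform_limitD e' by blast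
      then have "\<forall>\<^sub>F k in sequentially. \<forall>c\<in>{..<n}. \<forall>s\<in>{0..1}. dist (P k s c) (Q s c) < e'"
        by (rule eventually_ball_finite[rotated]) simp
      then show "\<forall>\<^sub>F k in sequentially. \<forall>s\<in>{0..1}. dist (g k s) (G r s) < e"
      proof (rule eventually_mono)
        fix k assume H: "\<forall>c\<in>{..<n}. \<forall>s\<in>{0..1}. dist (P k s c) (Q s c) < e'"
        show "\<forall>s\<in>{0..1}. dist (g k s) (G r s) < e"
        proof
          fix s :: real assume s: "s \<in> {0..1}"
          have "dist (g k s) (G r s) = norm (\<Sum>c<n. m r c s * (P k s c - Q s c))"
            by (simp add: g_def G_def dist_norm sum_subtractf[symmetric] right_diff_distrib)
          also have "\<dots> \<le> real n * B * e'"
            by (rule a2) (use H s mB r B in \<open>auto simp: dist_norm less_imp_le\<close>)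
          also have "\<dots> = K * e / (K + 1)" by (simp add: K_def e'_def)
          also have "\<dots> < e" using e K0 by (simp add: field_simps)
          finally show "dist (g k s) (G r s) < e" .
        qed
      qed
    qed
    have t0: "{0..t} \<subseteq> {0..1}" using t by auto
    have ugt: "uniform_limit {0..t} g (G r) sequentially"
      by (rule uniform_limit_on_subset[OF ugl t0])
    have gc: "continuous_on {0..t} (g k)" for k
      apply (rule continuous_on_subset[OF _ t0])
      unfolding g_def using mc r Pc by (auto intro!: continuous_on_sum continuous_on_mult)
    obtain I J where IJ: "\<And>k. (g k has_integral I k) {0..t}" "(G r has_integral J) {0..t}" "I \<longlonglongrightarrow> J"
      using uniform_limit_integral[OF ugt gc] by auto
    have PS: "P (Suc k) t r = vv r + I k" for k
      using integral_unique[OF IJ(1)[of k]] by (simp add: P_def g_def)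
    have "(\<lambda>k. P (Suc k) t r) \<longlonglongrightarrow> Q t r"
      using tendsto_uniform_limitI[OF U[OF r] t] by (rule LIMSEQ_Suc)
    moreover have "(\<lambda>k. P (Suc k) t r) \<longlonglongrightarrow> vv r + J"
      unfolding PS by (intro tendsto_add tendsto_const IJ(3))
    ultimately have "Q t r = vv r + J" by (rule LIMSEQ_unique)
    then show ?thesis using integral_unique[OF IJ(2)] by simp
  qed
  define q where "q t = vec n (\<lambda>r. Q t r)" for t
  have "lin_sol n M q"
    unfolding lin_sol_def
  proof (intro ballI conjI)
    fix s :: real assume s: "s \<in> {0..1}"
    show "q s \<in> carrier_vec n" by (simp add: q_def)
    show "\<forall>r<n. ((\<lambda>u. q u $ r) has_vector_derivative (M s *\<^sub>v q s) $ r) (at s within {0..1})"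
    proof (intro allI impI)
    fix r assume r: "r < n"
    have Mq: "(M s *\<^sub>v q s) $ r = G r s"
      using Mc[of s] r by (simp add: q_def G_def m_def scalar_prod_def lessThan_atLeast0)
    have "((\<lambda>u. vv r + integral {0..u} (G r)) has_vector_derivative G r s) (at s within {0..1})"
      using has_vector_derivative_add[OF has_vector_derivative_const integral_has_vector_derivative[OF GC[OF r] s]] by simp
    note d = this
    have "((\<lambda>u. q u $ r) has_vector_derivative G r s) (at s within {0..1})"
      by (rule has_vector_derivative_transform[OF s _ d]) (simp add: q_def r I)
    then show "((\<lambda>u. q u $ r) has_vector_derivative (M s *\<^sub>v q s) $ r) (at s within {0..1})"
      by (simp add: Mq)
  qed
  qed
  moreover have "q 0 = v"
  proof (rule eq_vecI)
    fix r assume "r < dim_vec v"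
    then have r: "r < n" using v by simp
    show "q 0 $ r = v $ r" using I[of 0 r] r by (simp add: q_def vv_def)
  qed (use v in \<open>simp add: q_def\<close>)
  ultimately show ?thesis by blast
qed


lemma ode_exists_back:
  fixes M :: "real \<Rightarrow> complex mat" and v :: "complex vec"
  assumes Mc: "\<And>s. M s \<in> carrier_mat n n"
    and cont: "\<And>r c. r<n \<Longrightarrow> c<n \<Longrightarrow> continuous_on {0..1} (\<lambda>s. M s $$ (r,c))"
    and v: "v \<in> carrier_vec n"
  shows "\<exists>p. lin_sol n M p \<and> p 1 = v"
proof -
  define M' where "M' \<sigma> = - M (1 - \<sigma>)" for \<sigma>
  have M'c: "M' \<sigma> \<in> carrier_mat n n" for \<sigma> using Mc by (simp add: M'_def)
  have im: "(\<lambda>u::real. 1 - u) ` {0..1} = {0..1}"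
  proof
    show "(\<lambda>u::real. 1 - u) ` {0..1} \<subseteq> {0..1}" by auto
    show "{0..1} \<subseteq> (\<lambda>u::real. 1 - u) ` {0..1}"
    proof
      fix x :: real assume "x \<in> {0..1}"
      then show "x \<in> (\<lambda>u::real. 1 - u) ` {0..1}" by (intro image_eqI[where x="1 - x"]) auto
    qed
  qed
  have cont': "continuous_on {0..1} (\<lambda>\<sigma>. M' \<sigma> $$ (r,c))" if "r<n" "c<n" for r c
  proof -
    have "continuous_on {0..1} (\<lambda>\<sigma>. - (M (1-\<sigma>) $$ (r,c)))"
      by (intro continuous_on_minus continuous_on_compose2[OF cont[OF that]]) (auto intro!: continuous_intros)
    moreover have "dim_row (M x) = n" "dim_col (M x) = n" for x using Mc[of x] by auto
    ultimately show ?thesis using that by (simp add: M'_def)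
  qed
  obtain r where r: "lin_sol n M' r" "r 0 = v" using ode_exists[OF M'c cont' v] by blast
  define p where "p s = r (1 - s)" for s
  have "lin_sol n M p" unfolding lin_sol_def
  proof (intro ballI conjI)
    fix s :: real assume s: "s \<in> {0..1}"
    have s': "1 - s \<in> {0..1}" using s by auto
    from r(1) s' have rc: "r (1-s) \<in> carrier_vec n"
      and rd: "\<forall>i<n. ((\<lambda>t. r t $ i) has_vector_derivative (M' (1-s) *\<^sub>v r (1-s)) $ i) (at (1-s) within {0..1})"
      unfolding lin_sol_def by auto
    show "p s \<in> carrier_vec n" using rc by (simp add: p_def)
    show "\<forall>i<n. ((\<lambda>t. p t $ i) has_vector_derivative (M s *\<^sub>v p s) $ i) (at s within {0..1})"
    proof (intro allI impI)
      fix i assume i: "i<n"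
      have f: "((\<lambda>u::real. 1 - u) has_vector_derivative -1) (at s within {0..1})"
        unfolding has_real_derivative_iff_has_vector_derivative[symmetric] by (auto intro!: derivative_eq_intros)
      have g: "((\<lambda>t. r t $ i) has_vector_derivative (M' (1-s) *\<^sub>v r (1-s)) $ i) (at ((\<lambda>u::real. 1-u) s) within (\<lambda>u::real. 1-u) ` {0..1})"
        using rd i im by simp
      have "(((\<lambda>t. r t $ i) \<circ> (\<lambda>u. 1-u)) has_vector_derivative (-1) *\<^sub>R ((M' (1-s) *\<^sub>v r (1-s)) $ i)) (at s within {0..1})"
        by (rule vector_diff_chain_within[OF f g])
      moreover have "(-1::real) *\<^sub>R ((M' (1-s) *\<^sub>v r (1-s)) $ i) = (M s *\<^sub>v p s) $ i"
      proof -
        have "M' (1-s) *\<^sub>v r (1-s) = - (M s *\<^sub>v p s)"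
          using Mc[of s] rc by (simp add: M'_def p_def carrier_matD carrier_vecD)
        then show ?thesis using i Mc[of s] by (simp add: carrier_matD)
      qed
      ultimately show "((\<lambda>t. p t $ i) has_vector_derivative (M s *\<^sub>v p s) $ i) (at s within {0..1})"
        by (simp add: o_def p_def)
    qed
  qed
  moreover have "p 1 = v" by (simp add: p_def r(2))
  ultimately show ?thesis by blast
qed

lemma cont_if: "continuous_on S f \<Longrightarrow> continuous_on S (\<lambda>s. if P then f s else c)"
  by (cases P) auto

lemma Amat_carrier: "Amat d N \<Delta> h nd A s \<mu> \<in> carrier_mat (N*d) (N*d)"
  by (simp add: Amat_def)

lemma Amat_cont:
  assumes d: "d \<ge> 1" and sm: "\<forall>j\<le>h. \<forall>i<d. \<forall>l<d. smooth_fun (\<lambda>t. A j t $$ (i, l))"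
    and r: "r < N*d" and c: "c < N*d"
  shows "continuous_on {0..1} (\<lambda>s. Amat d N \<Delta> h nd A s \<mu> $$ (r,c))"
proof -
  have fc: "continuous_on UNIV (\<lambda>t. A j t $$ (i,l))" if "j\<le>h" "i<d" "l<d" for j i l
  proof (rule differentiable_imp_continuous_on)
    have "\<forall>k x. ((deriv ^^ k) (\<lambda>t. A j t $$ (i,l))) differentiable (at x)"
      using sm that unfolding smooth_fun_def by blast
    then show "(\<lambda>t. A j t $$ (i,l)) differentiable_on UNIV"
      unfolding differentiable_on_def by (metis funpow_0)
  qed
  have gen: "continuous_on S (\<lambda>s. complex_of_real (A j (f s) $$ (i,l)))"
    if "j\<le>h" "i<d" "l<d" "continuous_on S f" for j i l f and S :: "real set"
    by (intro continuous_on_of_real continuous_on_compose2[OF fc[OF that(1-3)] that(4)]) auto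
  have rd: "r mod d < d" "c mod d < d" using d by auto
  show ?thesis
    unfolding Amat_def index_mat[OF r c] Let_def prod.case
    by (intro continuous_on_mult continuous_on_const continuous_on_sum cont_if gen) (use rd in \<open>auto intro!: continuous_intros\<close>)
qed

lemma Amat_cnj:
  assumes r: "r < N*d" and c: "c < N*d"
  shows "Amat d N \<Delta> h nd A s (cnj \<mu>) $$ (r,c) = cnj (Amat d N \<Delta> h nd A s \<mu> $$ (r,c))"
  unfolding Amat_def index_mat[OF r c] Let_def prod.case
  by (simp add: cnj_sum if_distrib[where f=cnj] complex_cnj_mult cong: if_cong)

lemma Bmat_cnj:
  assumes r: "r < N*d" and c: "c < N*d"
  shows "Bmat d N (cnj \<mu>) $$ (r,c) = cnj (Bmat d N \<mu> $$ (r,c))"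
  unfolding Bmat_def index_mat[OF r c] prod.case
  by simp

lemma duality:
  fixes MA MB :: "real \<Rightarrow> complex mat" and p q :: "real \<Rightarrow> complex vec"
  assumes MAc: "\<And>s. MA s \<in> carrier_mat n n" and MBc: "\<And>s. MB s \<in> carrier_mat n n"
    and cj: "\<And>s r c. r<n \<Longrightarrow> c<n \<Longrightarrow> MB s $$ (r,c) = cnj (MA s $$ (r,c))"
    and q: "lin_sol n MA q" and p: "lin_sol n (\<lambda>s. - transpose_mat (MB s)) p"
  shows "conjugate (p 1) \<bullet> q 1 = conjugate (p 0) \<bullet> q 0"
proof -
  define f where "f s = (\<Sum>r<n. cnj (p s $ r) * q s $ r)" for s
  have sp: "conjugate (p s) \<bullet> q s = f s" if "s\<in>{0..1}" for s
  proof -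
    have "q s \<in> carrier_vec n" "p s \<in> carrier_vec n" using p q that unfolding lin_sol_def by auto
    then show ?thesis by (simp add: scalar_prod_def f_def lessThan_atLeast0 carrier_vecD)
  qed
  have deriv: "(f has_vector_derivative 0) (at s within {0..1})" if s: "s\<in>{0..1}" for s
  proof -
    from q s have qc: "q s \<in> carrier_vec n"
      and qd: "\<forall>r<n. ((\<lambda>t. q t $ r) has_vector_derivative (MA s *\<^sub>v q s) $ r) (at s within {0..1})"
      unfolding lin_sol_def by auto
    from p s have pc: "p s \<in> carrier_vec n"
      and pd: "\<forall>r<n. ((\<lambda>t. p t $ r) has_vector_derivative (- transpose_mat (MB s) *\<^sub>v p s) $ r) (at s within {0..1})"
      unfolding lin_sol_def by auto
    have "(f has_vector_derivative (\<Sum>r<n. cnj (p s $ r) * (MA s *\<^sub>v q s) $ r + cnj ((- transpose_mat (MB s) *\<^sub>v p s) $ r) * q s $ r)) (at s within {0..1})"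
      unfolding f_def
      by (intro has_vector_derivative_sum has_vector_derivative_mult has_vector_derivative_cnj) (use qd pd in auto)
    moreover have "(\<Sum>r<n. cnj (p s $ r) * (MA s *\<^sub>v q s) $ r + cnj ((- transpose_mat (MB s) *\<^sub>v p s) $ r) * q s $ r) = 0"
    proof -
      have e1: "(MA s *\<^sub>v q s) $ r = (\<Sum>c<n. MA s $$ (r,c) * q s $ c)" if "r<n" for r
        using that MAc[of s] qc by (simp add: scalar_prod_def lessThan_atLeast0 carrier_matD carrier_vecD)
      have e2: "cnj ((- transpose_mat (MB s) *\<^sub>v p s) $ r) = - (\<Sum>c<n. MA s $$ (c,r) * cnj (p s $ c))" if "r<n" for r
        using that MBc[of s] pc by (simp add: scalar_prod_def lessThan_atLeast0 carrier_matD carrier_vecD cj cnj_sum sum_negf)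
      have sw: "(\<Sum>r<n. \<Sum>c<n. MA s $$ (c,r) * cnj (p s $ c) * q s $ r) = (\<Sum>r<n. \<Sum>c<n. cnj (p s $ r) * (MA s $$ (r,c) * q s $ c))"
        by (subst sum.swap) (simp add: mult_ac)
      have "(\<Sum>r<n. cnj (p s $ r) * (MA s *\<^sub>v q s) $ r + cnj ((- transpose_mat (MB s) *\<^sub>v p s) $ r) * q s $ r)
          = (\<Sum>r<n. (\<Sum>c<n. cnj (p s $ r) * (MA s $$ (r,c) * q s $ c)) - (\<Sum>c<n. MA s $$ (c,r) * cnj (p s $ c) * q s $ r))"
        by (rule sum.cong) (simp_all add: e1 e2 sum_distrib_left sum_distrib_right)
      also have "\<dots> = 0" by (simp add: sum_subtractf sw)
      finally show ?thesis .
    qed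
    ultimately show ?thesis by simp
  qed
  obtain k where "\<forall>x\<in>{0..1::real}. f x = k"
    using has_derivative_zero_constant[of "{0..1::real}" f] deriv
    unfolding has_vector_derivative_def by auto
  then have "f 1 = f 0" by auto
  then show ?thesis using sp[of 0] sp[of 1] by simp
qed

lemma adj_B:
  fixes B B' :: "complex mat" and u v :: "complex vec"
  assumes B: "B \<in> carrier_mat n n" and B': "B' \<in> carrier_mat n n"
    and cj: "\<And>r c. r<n \<Longrightarrow> c<n \<Longrightarrow> B' $$ (r,c) = cnj (B $$ (r,c))"
    and u: "u \<in> carrier_vec n" and v: "v \<in> carrier_vec n"
  shows "conjugate u \<bullet> (B *\<^sub>v v) = conjugate (transpose_mat B' *\<^sub>v u) \<bullet> v"
proof -
  have L: "conjugate u \<bullet> (B *\<^sub>v v) = (\<Sum>r<n. cnj (u$r) * (\<Sum>c<n. B$$(r,c) * v$c))"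
    using B u v by (simp add: scalar_prod_def lessThan_atLeast0 carrier_matD carrier_vecD)
  have R: "conjugate (transpose_mat B' *\<^sub>v u) \<bullet> v = (\<Sum>c<n. (\<Sum>r<n. B$$(r,c) * cnj (u$r)) * v$c)"
    using B' u v by (simp add: scalar_prod_def lessThan_atLeast0 carrier_matD carrier_vecD cnj_sum cj)
  show ?thesis unfolding L R sum_distrib_left sum_distrib_right
    by (subst sum.swap) (simp add: mult_ac)
qed


lemma conj_unit: "i < n \<Longrightarrow> conjugate (unit_vec n i :: complex vec) = unit_vec n i"
  by (rule eq_vecI) (auto simp: unit_vec_def)

lemma conj_unit_sprod: "i < n \<Longrightarrow> x \<in> carrier_vec n \<Longrightarrow> conjugate (unit_vec n i :: complex vec) \<bullet> x = x $ i"
  by (simp add: conj_unit)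

lemma conjugate_minus_vec:
  fixes a b :: "complex vec"
  assumes "a \<in> carrier_vec n" "b \<in> carrier_vec n"
  shows "conjugate (a - b) = conjugate a - conjugate b"
  by (rule eq_vecI) (use assms in auto)

lemma Bmat_carrier: "Bmat d N \<mu> \<in> carrier_mat (N*d) (N*d)"
  by (simp add: Bmat_def)

theorem theorem4p1:
  fixes d N h :: nat and \<Delta> :: real and nd :: "nat \<Rightarrow> nat"
    and A :: "nat \<Rightarrow> real \<Rightarrow> real mat"
    and u :: "complex vec" and \<mu> :: complex
  assumes "d \<ge> 1" and "N \<ge> 1" and "\<Delta> > 0"
    and "nd 0 = 0" and "\<forall>j. 1 \<le> j \<and> j < h \<longrightarrow> nd j < nd (Suc j)"
    and "\<forall>j\<le>h. \<forall>t. A j t \<in> carrier_mat d d"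
    and "\<forall>j\<le>h. \<forall>i<d. \<forall>l<d. smooth_fun (\<lambda>t. A j t $$ (i, l))"
    and "\<forall>j\<le>h. \<forall>t. A j (t + real N * \<Delta>) = A j t"
    and "u \<in> carrier_vec (N * d)" and "\<mu> \<noteq> 0"
  shows "(u \<noteq> 0\<^sub>v (N * d) \<and>
           (\<forall>v\<in>carrier_vec (N * d). conjugate u \<bullet> Nop d N \<Delta> h nd A \<mu> v = 0))
     \<longleftrightarrow> (u \<noteq> 0\<^sub>v (N * d) \<and> Mop d N \<Delta> h nd A (cnj \<mu>) u = 0\<^sub>v (N * d))"
proof -
  note d1 = assms(1) and sm = assms(7) and u = assms(9)
  define n where "n = N * d"
  define MA where "MA = (\<lambda>s. Amat d N \<Delta> h nd A s \<mu>)"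
  define MB where "MB = (\<lambda>s. Amat d N \<Delta> h nd A s (cnj \<mu>))"
  define MBt where "MBt = (\<lambda>s. - transpose_mat (MB s))"
  have MAc: "MA s \<in> carrier_mat n n" for s by (simp add: MA_def n_def Amat_carrier)
  have MBc: "MB s \<in> carrier_mat n n" for s by (simp add: MB_def n_def Amat_carrier)
  have MBtc: "MBt s \<in> carrier_mat n n" for s using MBc[of s] by (simp add: MBt_def)
  have cj: "MB s $$ (r,c) = cnj (MA s $$ (r,c))" if "r<n" "c<n" for s r c
    using Amat_cnj that by (simp add: MA_def MB_def n_def)
  have contA: "continuous_on {0..1} (\<lambda>s. MA s $$ (r,c))" if "r<n" "c<n" for r c
    using Amat_cont[OF d1 sm] that by (simp add: MA_def n_def)
  have contBt: "continuous_on {0..1} (\<lambda>s. MBt s $$ (r,c))" if "r<n" "c<n" for r c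
  proof -
    have "continuous_on {0..1} (\<lambda>s. - (MB s $$ (c,r)))"
      using Amat_cont[OF d1 sm] that by (intro continuous_on_minus) (simp add: MB_def n_def)
    moreover have "dim_row (MB s) = n" "dim_col (MB s) = n" for s using MBc[of s] by auto
    ultimately show ?thesis using that by (simp add: MBt_def)
  qed
  have fwd: "\<exists>q. lin_sol n MA q \<and> q 0 = v" if "v \<in> carrier_vec n" for v
    by (rule ode_exists[OF MAc contA that])
  have bwd: "\<exists>p. lin_sol n MBt p \<and> p 1 = v" if "v \<in> carrier_vec n" for v
    by (rule ode_exists_back[OF MBtc contBt that])
  have dual: "conjugate (p 1) \<bullet> q 1 = conjugate (p 0) \<bullet> q 0" if "lin_sol n MA q" "lin_sol n MBt p" for p q :: "real \<Rightarrow> complex vec"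
    using duality[where MA=MA and MB=MB and n=n, OF MAc MBc cj] that unfolding MBt_def by blast
  have solc: "q s \<in> carrier_vec n" if "lin_sol n M q" "s \<in> {0..1}" for M s and q :: "real \<Rightarrow> complex vec"
    using that unfolding lin_sol_def by auto
  have uniq_fwd: "q1 1 = q2 1" if "lin_sol n MA q1" "lin_sol n MA q2" "q1 0 = q2 0" for q1 q2 :: "real \<Rightarrow> complex vec"
  proof (rule eq_vecI)
    have c1: "q1 1 \<in> carrier_vec n" and c2: "q2 1 \<in> carrier_vec n" using solc that by auto
    then show "dim_vec (q1 1) = dim_vec (q2 1)" by auto
    fix i assume "i < dim_vec (q2 1)"
    then have i: "i < n" using c2 by auto
    obtain p where p: "lin_sol n MBt p" "p 1 = unit_vec n i" using bwd[of "unit_vec n i"] by auto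
    have "conjugate (p 1) \<bullet> q1 1 = conjugate (p 1) \<bullet> q2 1"
      using dual[OF that(1) p(1)] dual[OF that(2) p(1)] that(3) by simp
    then show "q1 1 $ i = q2 1 $ i" using p(2) conj_unit_sprod[OF i] c1 c2 by simp
  qed
  have uniq_bwd: "p1 0 = p2 0" if "lin_sol n MBt p1" "lin_sol n MBt p2" "p1 1 = p2 1" for p1 p2 :: "real \<Rightarrow> complex vec"
  proof (rule eq_vecI)
    have c1: "p1 0 \<in> carrier_vec n" and c2: "p2 0 \<in> carrier_vec n" using solc that by auto
    then show "dim_vec (p1 0) = dim_vec (p2 0)" by auto
    fix i assume "i < dim_vec (p2 0)"
    then have i: "i < n" using c2 by auto
    obtain q where q: "lin_sol n MA q" "q 0 = unit_vec n i" using fwd[of "unit_vec n i"] by auto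
    have "conjugate (p1 0) \<bullet> q 0 = conjugate (p2 0) \<bullet> q 0"
      using dual[OF q(1) that(1)] dual[OF q(1) that(2)] that(3) by simp
    then have "cnj (p1 0 $ i) = cnj (p2 0 $ i)" using q(2) i c1 c2 by simp
    then show "p1 0 $ i = p2 0 $ i" by simp
  qed
  have Nop_eq: "Nop d N \<Delta> h nd A \<mu> v = q 1 - Bmat d N \<mu> *\<^sub>v v" if "lin_sol n MA q" "q 0 = v" for q :: "real \<Rightarrow> complex vec" and v
    unfolding Nop_def MA_def[symmetric] n_def[symmetric]
  proof (rule the_equality)
    show "\<exists>q'. lin_sol n MA q' \<and> q' 0 = v \<and> q 1 - Bmat d N \<mu> *\<^sub>v v = q' 1 - Bmat d N \<mu> *\<^sub>v v"
      using that by blast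
    fix w assume "\<exists>q'. lin_sol n MA q' \<and> q' 0 = v \<and> w = q' 1 - Bmat d N \<mu> *\<^sub>v v"
    then obtain q' where "lin_sol n MA q'" "q' 0 = v" "w = q' 1 - Bmat d N \<mu> *\<^sub>v v" by blast
    then show "w = q 1 - Bmat d N \<mu> *\<^sub>v v" using uniq_fwd[OF that(1), of q'] that(2) by simp
  qed
  obtain p where p: "lin_sol n MBt p" "p 1 = u" using bwd u by (auto simp: n_def)
  define Mu where "Mu = p 0 - transpose_mat (Bmat d N (cnj \<mu>)) *\<^sub>v u"
  have MBt_eq: "(\<lambda>s. - transpose_mat (Amat d N \<Delta> h nd A s (cnj \<mu>))) = MBt"
    by (simp add: MBt_def MB_def)
  have Mop_eq: "Mop d N \<Delta> h nd A (cnj \<mu>) u = Mu"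
    unfolding Mop_def MBt_eq n_def[symmetric]
  proof (rule the_equality)
    show "\<exists>p'. lin_sol n MBt p' \<and> p' 1 = u \<and> Mu = p' 0 - transpose_mat (Bmat d N (cnj \<mu>)) *\<^sub>v u"
      using p Mu_def by blast
    fix w assume "\<exists>p'. lin_sol n MBt p' \<and> p' 1 = u \<and> w = p' 0 - transpose_mat (Bmat d N (cnj \<mu>)) *\<^sub>v u"
    then obtain p' where "lin_sol n MBt p'" "p' 1 = u" "w = p' 0 - transpose_mat (Bmat d N (cnj \<mu>)) *\<^sub>v u" by blast
    then show "w = Mu" using uniq_bwd[OF p(1), of p'] p(2) Mu_def by simp
  qed
  have un: "u \<in> carrier_vec n" using u by (simp add: n_def)
  have Bc: "Bmat d N \<mu> \<in> carrier_mat n n" "Bmat d N (cnj \<mu>) \<in> carrier_mat n n" by (simp_all add: n_def Bmat_carrier)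
  have p0: "p 0 \<in> carrier_vec n" using solc p by auto
  have Muc: "Mu \<in> carrier_vec n" using p0 Bc un by (simp add: Mu_def)
  have key: "conjugate u \<bullet> Nop d N \<Delta> h nd A \<mu> v = conjugate Mu \<bullet> v" if v: "v \<in> carrier_vec n" for v
  proof -
    obtain q where q: "lin_sol n MA q" "q 0 = v" using fwd[OF v] by blast
    have q1: "q 1 \<in> carrier_vec n" using solc q by auto
    have Bv: "Bmat d N \<mu> *\<^sub>v v \<in> carrier_vec n" using Bc v by simp
    have BTu: "transpose_mat (Bmat d N (cnj \<mu>)) *\<^sub>v u \<in> carrier_vec n" using Bc un by simp
    have "conjugate u \<bullet> Nop d N \<Delta> h nd A \<mu> v = conjugate u \<bullet> q 1 - conjugate u \<bullet> (Bmat d N \<mu> *\<^sub>v v)"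
      unfolding Nop_eq[OF q] by (rule scalar_prod_minus_distrib[OF _ q1 Bv]) (use un in simp)
    also have "conjugate u \<bullet> q 1 = conjugate (p 0) \<bullet> v"
      using dual[OF q(1) p(1)] p(2) q(2) by simp
    also have "conjugate u \<bullet> (Bmat d N \<mu> *\<^sub>v v) = conjugate (transpose_mat (Bmat d N (cnj \<mu>)) *\<^sub>v u) \<bullet> v"
      by (rule adj_B[OF Bc(1) Bc(2) _ un v]) (simp add: Bmat_cnj n_def)
    also have "conjugate (p 0) \<bullet> v - conjugate (transpose_mat (Bmat d N (cnj \<mu>)) *\<^sub>v u) \<bullet> v = conjugate Mu \<bullet> v"
      unfolding Mu_def conjugate_minus_vec[OF p0 BTu]
      by (rule minus_scalar_prod_distrib[symmetric]) (use p0 BTu v in simp_all)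
    finally show ?thesis .
  qed
  have "(\<forall>v\<in>carrier_vec n. conjugate Mu \<bullet> v = 0) \<longleftrightarrow> Mu = 0\<^sub>v n"
  proof
    assume H: "\<forall>v\<in>carrier_vec n. conjugate Mu \<bullet> v = 0"
    show "Mu = 0\<^sub>v n"
    proof (rule eq_vecI)
      show "dim_vec Mu = dim_vec (0\<^sub>v n)" using Muc by simp
      fix i assume "i < dim_vec (0\<^sub>v n)"
      then have i: "i < n" by simp
      have "conjugate Mu \<bullet> unit_vec n i = 0" using H by simp
      then have "cnj (Mu $ i) = 0" using i Muc by simp
      then show "Mu $ i = 0\<^sub>v n $ i" using i by simp
    qed
  next
    assume "Mu = 0\<^sub>v n"
    then show "\<forall>v\<in>carrier_vec n. conjugate Mu \<bullet> v = 0" by simp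
  qed
  then show ?thesis using key Mop_eq by (simp add: n_def)
qed


end
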